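(* For $0\le\alpha<1$, $R_{\mathcal{S}^*_{Ne}}(\mathcal{S}^*(\alpha))=\dfrac{2}{3(1-2\alpha)+5}$, and this is sharp for the function $k_\alpha(z)=z(1-z)^{2\alpha-2}$.
   Context: $\mathbb{D}=\{|z|<1\}$, $\mathbb{D}_r=\{|z|<r\}$. $\mathcal{A}$ is the class of analytic $f$ on $\mathbb{D}$ with $f(0)=0$, $f'(0)=1$; for $f\in\mathcal{A}$ let $\mathcal{Q}_f(z)=zf'(z)/f(z)$. For analytic $F,G$ on $\mathbb{D}$, $F\prec G$ means $F=G\circ w$ for some analytic $w:\mathbb{D}\to\mathbb{D}$ with $w(0)=0$. For analytic $\varphi$ on $\mathbb{D}$, $\mathcal{S}^*(\varphi)=\{f\in\mathcal{A}:\mathcal{Q}_f\prec\varphi\}$. Let $\varphi_{Ne}(z)=1+z-z^3/3$ (univalent on $\mathbb{D}$), $\Omega_{Ne}=\varphi_{Ne}(\mathbb{D})$, and $\mathcal{S}^*_{Ne}=\mathcal{S}^*(\varphi_{Ne})$. For $\mathcal{G}\subset\mathcal{A}$, the $\mathcal{S}^*_{Ne}$-radius $R_{\mathcal{S}^*_{Ne}}(\mathcal{G})$ is the largest $\rho\in(0,1]$ such that $\mathcal{Q}_f(\mathbb{D}_\rho)\subseteq\Omega_{Ne}$ for all $f\in\mathcal{G}$ (equivalently $r^{-1}f(rz)\in\mathcal{S}^*_{Ne}$ for all $f\in\mathcal{G}$, $0<r\le\rho$). $\mathcal{S}^*(\alpha)=\{f\in\mathcal{A}:\mathrm{Re}\,\mathcal{Q}_f(z)>\alpha,\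 z\in\mathbb{D}\}$. Sharpness means $k_\alpha\in\mathcal{S}^*(\alpha)$ and $\mathcal{Q}_{k_\alpha}(\partial\mathbb{D}_\rho)$ meets $\partial\Omega_{Ne}$ for $\rho$ the stated radius. *)

theory Defs
  imports "HOL-Analysis.Analysis"
begin

definition classA :: "(complex \<Rightarrow> complex) set" where
  "classA = {f. f holomorphic_on ball 0 1 \<and> f 0 = 0 \<and> deriv f 0 = 1}"

text \<open>Q_f(z) = z f'(z)/f(z), with its removable value Q_f(0) = 1.\<close>
definition Qf :: "(complex \<Rightarrow> complex) \<Rightarrow> complex \<Rightarrow> complex" where
  "Qf f z = (if z = 0 then 1 else z * deriv f z / f z)"

definition phiNe :: "complex \<Rightarrow> complex" where
  "phiNe z = 1 + z - z ^ 3 / 3"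

definition OmegaNe :: "complex set" where
  "OmegaNe = phiNe ` ball 0 1"

text \<open>Starlike functions of order alpha (f nonvanishing off 0 so that Q_f is defined).\<close>
definition starlike_order :: "real \<Rightarrow> (complex \<Rightarrow> complex) set" where
  "starlike_order \<alpha> = {f \<in> classA. (\<forall>z\<in>ball 0 1. z \<noteq> 0 \<longrightarrow> f z \<noteq> 0)
                          \<and> (\<forall>z\<in>ball 0 1. Re (Qf f z) > \<alpha>)}"

text \<open>Admissible radii for the S*_Ne-radius of a class G; the radius is the greatest one.\<close>
definition NeRadii :: "(complex \<Rightarrow> complex) set \<Rightarrow> real set" where
  "NeRadii G = {\<rho>. 0 < \<rho> \<and> \<rho> \<le> 1 \<and> (\<forall>f\<in>G. Qf f ` ball 0 \<rho> \<subseteq> OmegaNe)}"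

definition k_ext :: "real \<Rightarrow> complex \<Rightarrow> complex" where
  "k_ext \<alpha> z = z * (1 - z) powr (of_real (2 * \<alpha> - 2))"

end

theory Submission imports Defs "HOL-Complex_Analysis.Complex_Analysis" begin

lemma disk_in_Omega:
  fixes q :: complex
  assumes "cmod (q - 1) < 2/3"
  shows "q \<in> OmegaNe"
proof -
  define m where "m = cmod (q - 1)"
  have m0: "0 \<le> m" "m < 2/3" using assms by (auto simp: m_def)
  define \<delta> where "\<delta> = min 1 (sqrt (2/3 - m))"
  have d0: "0 < \<delta>" "\<delta> \<le> 1" using m0 by (auto simp: \<delta>_def)
  have d2: "\<delta>^2 \<le> 2/3 - m"
  proof -
    have "\<delta> \<le> sqrt (2/3 - m)" by (simp add: \<delta>_def)
    hence "\<delta>^2 \<le> (sqrt (2/3 - m))^2" using d0 by (intro power_mono) auto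
    thus ?thesis using m0 by simp
  qed
  define s where "s = 1 - \<delta>"
  have s0: "0 \<le> s" "s < 1" using d0 by (auto simp: s_def)
  have s3: "m + s^3/3 \<le> s"
  proof -
    have "s - s^3/3 = 2/3 - \<delta>^2 + \<delta>^3/3" by (simp add: s_def power3_eq_cube power2_eq_square field_simps)
    moreover have "\<delta>^3 \<ge> 0" using d0 by simp
    ultimately show ?thesis using d2 by linarith
  qed
  define T where "T z = (q - 1) + z^3/3" for z :: complex
  have "\<exists>!x\<in>cball 0 s. T x = x"
  proof (rule Banach_fix[where c = "s^2"])
    show "complete (cball (0::complex) s)" by (simp add: complete_eq_closed)
    show "cball (0::complex) s \<noteq> {}" using s0 by simp
    show "0 \<le> s^2" by simp
    show "s^2 < 1" using s0 by (simp add: power_less_one_iff abs_square_less_1)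
    show "T ` cball 0 s \<subseteq> cball 0 s"
    proof
      fix y assume "y \<in> T ` cball 0 s"
      then obtain z where z: "cmod z \<le> s" "y = T z" by auto
      have "cmod (z^3/3) = cmod z ^3 / 3" by (simp add: norm_power)
      also have "\<dots> \<le> s^3/3" using z s0 by (simp add: power_mono)
      finally have "cmod y \<le> m + s^3/3" unfolding z T_def m_def
        by (meson add_mono norm_triangle_le order_refl)
      thus "y \<in> cball 0 s" using s3 by simp
    qed
    fix x y :: complex assume xy: "x \<in> cball 0 s" "y \<in> cball 0 s"
    hence nx: "cmod x \<le> s" "cmod y \<le> s" by auto
    have "T x - T y = (x - y) * ((x^2 + x*y + y^2)/3)" by (simp add: T_def power2_eq_square power3_eq_cube algebra_simps)
    hence "dist (T x) (T y) = cmod (x - y) * cmod ((x^2 + x*y + y^2)/3)" by (simp only: dist_norm norm_mult)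
    also have "cmod ((x^2 + x*y + y^2)/3) \<le> s^2"
    proof -
      have "cmod (x^2 + x*y + y^2) \<le> cmod (x^2) + cmod (x*y) + cmod (y^2)"
        by (meson add_mono norm_triangle_ineq order_refl order_trans)
      also have "\<dots> = cmod x * cmod x + cmod x * cmod y + cmod y * cmod y"
        by (simp add: norm_mult power2_eq_square)
      also have "\<dots> \<le> s * s + s * s + s * s" using nx s0
        by (intro add_mono mult_mono) auto
      finally show ?thesis by (simp add: power2_eq_square)
    qed
    hence "cmod (x - y) * cmod ((x^2 + x*y + y^2)/3) \<le> s^2 * dist x y"
      by (metis dist_norm mult.commute mult_left_mono norm_ge_zero)
    finally show "dist (T x) (T y) \<le> s^2 * dist x y" .
  qed
  then obtain z where z: "cmod z \<le> s" "T z = z" by auto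
  have "phiNe z = q" using z(2) unfolding phiNe_def T_def by (simp add: algebra_simps)
  moreover have "z \<in> ball 0 1" using z s0 by simp
  ultimately show ?thesis unfolding OmegaNe_def by blast
qed


lemma Omega_real:
  assumes "q \<in> OmegaNe" "Im q = 0"
  shows "Re q < 5/3"
proof -
  obtain z where z: "cmod z < 1" "q = phiNe z" using assms unfolding OmegaNe_def by auto
  define a where "a = Re z" define b where "b = Im z"
  have ab: "a^2 + b^2 < 1" using z(1) unfolding a_def b_def cmod_def
    by (metis real_sqrt_less_iff real_sqrt_one)
  have "Im q = b * (1 - a^2 + b^2/3)"
    unfolding z a_def b_def phiNe_def by (simp add: power3_eq_cube power2_eq_square field_simps)
  moreover have "1 - a^2 + b^2/3 > 0" using ab zero_le_power2[of b] by linarith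
  ultimately have b0: "b = 0" using assms(2) by simp
  have "Re q = 1 + a - a^3/3"
    unfolding z a_def phiNe_def using b0[unfolded b_def] by (simp add: power3_eq_cube algebra_simps)
  moreover have "a < 1" "a > -1" using ab b0 abs_square_less_1[of a] by (auto simp: abs_less_iff)
  moreover have "(a - 1)^2 * (a + 2) > 0" using calculation by simp
  ultimately show ?thesis by (simp add: power2_eq_square power3_eq_cube algebra_simps)
qed

lemma Qf_holo:
  assumes f: "f holomorphic_on ball 0 1" "f 0 = 0" "deriv f 0 = 1"
    and nz: "\<And>z. z \<in> ball 0 1 \<Longrightarrow> z \<noteq> 0 \<Longrightarrow> f z \<noteq> 0"
  shows "Qf f holomorphic_on ball 0 1"
proof (rule no_isolated_singularity[where K = "{0}"])
  have df: "deriv f holomorphic_on ball 0 1" using f(1) by (simp add: holomorphic_deriv)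
  have h1: "(\<lambda>z. z * deriv f z / f z) holomorphic_on (ball 0 1 - {0})"
    using nz by (intro holomorphic_intros holomorphic_on_subset[OF df] holomorphic_on_subset[OF f(1)]) auto
  show h2: "Qf f holomorphic_on (ball 0 1 - {0})"
    by (rule holomorphic_transform[OF h1]) (auto simp: Qf_def)
  show "open (ball (0::complex) 1)" by simp
  show "finite {0::complex}" by simp
  show "continuous_on (ball 0 1) (Qf f)"
  proof (clarsimp simp: continuous_on_eq_continuous_at)
    fix x :: complex assume x: "cmod x < 1"
    show "isCont (Qf f) x"
    proof (cases "x = 0")
      case False
      have "Qf f field_differentiable at x"
        using h2 False x by (intro holomorphic_on_imp_differentiable_at[of _ "ball 0 1 - {0}"]) auto
      thus ?thesis by (simp add: field_differentiable_imp_continuous_at)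
    next
      case True
      have fd: "(f has_field_derivative 1) (at 0)"
        using f by (metis DERIV_deriv_iff_field_differentiable holomorphic_on_imp_differentiable_at
              centre_in_ball open_ball zero_less_one)
      hence l1: "((\<lambda>z. f z / z) \<longlongrightarrow> 1) (at 0)"
        using f(2) by (simp add: has_field_derivative_iff)
      have "isCont (deriv f) 0"
        using df by (metis holomorphic_on_imp_continuous_on continuous_on_eq_continuous_at open_ball
              centre_in_ball zero_less_one)
      hence l2: "(deriv f \<longlongrightarrow> 1) (at 0)" using f(3) by (simp add: isCont_def)
      have "((\<lambda>z. deriv f z / (f z / z)) \<longlongrightarrow> 1 / 1) (at 0)"
        by (intro tendsto_divide l1 l2) auto
      hence "((\<lambda>z. deriv f z / (f z / z)) \<longlongrightarrow> 1) (at 0)" by simp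
      moreover have "\<forall>\<^sub>F z in at 0. deriv f z / (f z / z) = Qf f z"
        by (auto simp: Qf_def eventually_at_filter)
      ultimately have "(Qf f \<longlongrightarrow> 1) (at 0)" by (rule Lim_transform_eventually)
      thus ?thesis using True by (simp add: isCont_def Qf_def)
    qed
  qed
qed


lemma slit_ok: "cmod (z::complex) < 1 \<Longrightarrow> 1 - z \<notin> \<real>\<^sub>\<le>\<^sub>0"
proof
  assume "cmod z < 1" "1 - z \<in> \<real>\<^sub>\<le>\<^sub>0"
  moreover have "Re z < 1" using \<open>cmod z < 1\<close> abs_Re_le_cmod[of z] by linarith
  moreover obtain r where "1 - z = of_real r" "r \<le> 0" using calculation(2) by (auto simp: nonpos_Reals_def)
  moreover have "Re (1 - z) = r" using calculation(4) by (metis Re_complex_of_real)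
  hence "1 - Re z = r" by simp
  thus False using calculation(3,5) by linarith
qed

lemma k_deriv:
  assumes "cmod z < 1"
  shows "(k_ext \<alpha> has_field_derivative
          ((1 - z) powr (of_real (2*\<alpha>-2)) - z * (of_real (2*\<alpha>-2) * (1 - z) powr (of_real (2*\<alpha>-2) - 1)))) (at z)"
proof -
  define a :: complex where "a = of_real (2*\<alpha>-2)"
  have d0: "((\<lambda>w. w powr a) has_field_derivative a * (1-z) powr (a-1)) (at (1-z))"
    by (rule has_field_derivative_powr[OF slit_ok[OF assms]])
  have d1: "((\<lambda>z. (1 - z) powr a) has_field_derivative (a * (1 - z) powr (a - 1)) * (- 1)) (at z)"
    using DERIV_chain2[OF d0 DERIV_diff[OF DERIV_const DERIV_ident]] by simp
  have "((\<lambda>z. z * (1 - z) powr a) has_field_derivative (1 * (1 - z) powr a + z * ((a * (1 - z) powr (a - 1)) * (-1)))) (at z)"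
    using DERIV_mult[OF DERIV_ident d1] by (simp add: algebra_simps)
  thus ?thesis unfolding k_ext_def a_def[symmetric] by (simp add: algebra_simps)
qed

lemma Re_ofr: "Re (complex_of_real r * w) = r * Re w" by simp

lemma powr_m1: "(w::complex) \<noteq> 0 \<Longrightarrow> w powr (a - 1) = w powr a / w"
  by (simp add: powr_def exp_diff left_diff_distrib)

lemma k_Q:
  assumes "cmod z < 1" "z \<noteq> 0"
  shows "Qf (k_ext \<alpha>) z = 1 - of_real (2*\<alpha>-2) * z / (1 - z)"
proof -
  define a :: complex where "a = of_real (2*\<alpha>-2)"
  have w: "1 - z \<noteq> 0" using assms(1) by auto
  have W: "(1 - z) powr a \<noteq> 0" using w by (simp add: powr_def)
  have pm: "(1-z) powr (a-1) = (1-z) powr a/(1-z)" by (rule powr_m1[OF w])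
  have "deriv (k_ext \<alpha>) z = (1 - z) powr a - z * (a * ((1 - z) powr a / (1 - z)))"
    using DERIV_imp_deriv[OF k_deriv[OF assms(1), of \<alpha>, folded a_def]] unfolding pm .
  thus ?thesis unfolding Qf_def k_ext_def a_def[symmetric] using assms(2) w W
    by (simp add: field_simps)
qed

lemma k_in: "0 \<le> \<alpha> \<Longrightarrow> \<alpha> < 1 \<Longrightarrow> k_ext \<alpha> \<in> starlike_order \<alpha>"
proof -
  assume al: "0 \<le> \<alpha>" "\<alpha> < 1"
  have hol: "k_ext \<alpha> holomorphic_on ball 0 1"
    unfolding holomorphic_on_open[OF open_ball] by (metis k_deriv mem_ball_0)
  have "k_ext \<alpha> 0 = 0" by (simp add: k_ext_def)
  moreover have "deriv (k_ext \<alpha>) 0 = 1"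
    using DERIV_imp_deriv[OF k_deriv[of 0]] by simp
  moreover have "\<forall>z\<in>ball 0 1. z \<noteq> 0 \<longrightarrow> k_ext \<alpha> z \<noteq> 0"
    by (auto simp: k_ext_def powr_def)
  moreover have "\<forall>z\<in>ball 0 1. Re (Qf (k_ext \<alpha>) z) > \<alpha>"
  proof
    fix z :: complex assume z: "z \<in> ball 0 1"
    show "Re (Qf (k_ext \<alpha>) z) > \<alpha>"
    proof (cases "z = 0")
      case True thus ?thesis using al by (simp add: Qf_def)
    next
      case False
      have n: "(Re z)^2 + (Im z)^2 < 1" using z
        by (simp add: cmod_def)
      have d: "(1 - Re z)^2 + (Im z)^2 > 0"
      proof -
        have "Re z < 1" using n abs_square_less_1[of "Re z"] zero_le_power2[of "Im z"] by auto
        hence "(1 - Re z)^2 > 0" by simp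
        thus ?thesis using zero_le_power2[of "Im z"] by linarith
      qed
      have e: "Re (z / (1 - z)) = (Re z - (Re z)^2 - (Im z)^2) / ((1 - Re z)^2 + (Im z)^2)"
        by (simp add: Re_divide power2_eq_square algebra_simps)
      have "Re z - (Re z)^2 - (Im z)^2 > - ((1 - Re z)^2 + (Im z)^2) / 2"
        using n by (simp add: power2_eq_square field_simps)
      hence h12: "Re (z / (1 - z)) > -1/2" unfolding e using d by (simp add: field_simps)
      have "Qf (k_ext \<alpha>) z = 1 + of_real (2 - 2*\<alpha>) * (z / (1 - z))"
      proof -
        have w: "1 - z \<noteq> 0" using z by auto
        have "Qf (k_ext \<alpha>) z = 1 - of_real (2*\<alpha>-2) * z / (1 - z)" using k_Q[of z \<alpha>] False z by simp
        thus ?thesis using w by (simp add: field_simps)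
      qed
      hence e1: "Re (Qf (k_ext \<alpha>) z) = Re (1 + of_real (2 - 2*\<alpha>) * (z / (1 - z)))" by (rule arg_cong)
      have e2: "Re (1 + of_real (2 - 2*\<alpha>) * (z / (1 - z))) = 1 + (2 - 2*\<alpha>) * Re (z / (1 - z))"
        by (simp only: plus_complex.sel one_complex.sel Re_ofr)
      have "(2 - 2*\<alpha>) * Re (z / (1 - z)) > (2 - 2*\<alpha>) * (-1/2)"
        using al h12 by (intro mult_strict_left_mono) auto
      moreover have "(2 - 2*\<alpha>) * (-1/2) = \<alpha> - 1" by (simp add: field_simps)
      ultimately show ?thesis using e1 e2 by linarith
    qed
  qed
  ultimately show ?thesis using hol unfolding starlike_order_def classA_def by auto
qed


lemma k_real:
  assumes "0 \<le> x" "x < 1"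
  shows "Qf (k_ext \<alpha>) (of_real x) = of_real (1 + (2 - 2*\<alpha>) * x / (1 - x))"
proof (cases "x = 0")
  case True thus ?thesis by (simp add: Qf_def)
next
  case False
  have "Qf (k_ext \<alpha>) (of_real x) = 1 - of_real (2*\<alpha>-2) * of_real x / (1 - of_real x)"
    using k_Q[of "of_real x" \<alpha>] assms False by simp
  also have "\<dots> = of_real (1 - (2*\<alpha>-2) * x / (1 - x))" by simp
  also have "1 - (2*\<alpha>-2) * x / (1 - x) = 1 + (2 - 2*\<alpha>) * x / (1 - x)" using assms by (simp add: field_simps)
  finally show ?thesis .
qed

lemma five_thirds_frontier: "complex_of_real (5/3) \<in> frontier OmegaNe"
proof -
  have c: "continuous_on (closure (ball 0 1)) phiNe"
    unfolding phiNe_def by (intro continuous_intros) auto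
  have "phiNe ` closure (ball 0 1) \<subseteq> closure OmegaNe"
    by (rule image_closure_subset[OF c]) (use closure_subset[of OmegaNe] in \<open>auto simp: OmegaNe_def\<close>)
  moreover have "(1::complex) \<in> closure (ball 0 1)" by simp
  moreover have "phiNe 1 = of_real (5/3)" by (simp add: phiNe_def)
  ultimately have "of_real (5/3) \<in> closure OmegaNe" by force
  moreover have "complex_of_real (5/3) \<notin> OmegaNe" using Omega_real[of "of_real (5/3)"] by auto
  hence "complex_of_real (5/3) \<notin> interior OmegaNe" using interior_subset by blast
  ultimately show ?thesis by (simp add: frontier_def)
qed

lemma class_in:
  assumes al: "0 \<le> \<alpha>" "\<alpha> < 1" and f: "f \<in> starlike_order \<alpha>"
    and z: "cmod z < 2 / (3 * (1 - 2 * \<alpha>) + 5)"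
  shows "Qf f z \<in> OmegaNe"
proof -
  define r0 where "r0 = 2 / (3 * (1 - 2 * \<alpha>) + 5)"
  have r0: "r0 = 2 / (8 - 6*\<alpha>)" "0 < r0" "r0 < 1" using al by (auto simp: r0_def field_simps)
  have fA: "f holomorphic_on ball 0 1" "f 0 = 0" "deriv f 0 = 1"
      and nz: "\<And>z. z \<in> ball 0 1 \<Longrightarrow> z \<noteq> 0 \<Longrightarrow> f z \<noteq> 0"
      and re: "\<And>z. z \<in> ball 0 1 \<Longrightarrow> Re (Qf f z) > \<alpha>"
    using f unfolding starlike_order_def classA_def by auto
  define Q where "Q = Qf f"
  have hQ: "Q holomorphic_on ball 0 1" unfolding Q_def by (rule Qf_holo[OF fA nz])
  define w where "w z = (Q z - 1) / (Q z + 1 - 2 * of_real \<alpha>)" for z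
  have den: "Q u + 1 - 2 * of_real \<alpha> \<noteq> 0" if "u \<in> ball 0 1" for u
  proof -
    have "Re (Q u + 1 - 2 * of_real \<alpha>) > 0" using re[OF that] al unfolding Q_def by simp
    thus ?thesis by (metis zero_complex.sel(1) less_irrefl)
  qed
  have hw: "w holomorphic_on ball 0 1" unfolding w_def using den by (intro holomorphic_intros hQ) auto
  have w0: "w 0 = 0" by (simp add: w_def Q_def Qf_def)
  have wlt: "cmod (w u) < 1" if "cmod u < 1" for u
  proof -
    have u: "u \<in> ball 0 1" using that by simp
    define x where "x = Re (Q u)" define y where "y = Im (Q u)"
    have xa: "x > \<alpha>" using re[OF u] unfolding x_def Q_def by simp
    have "(cmod (Q u - 1))^2 = (x - 1)^2 + y^2" by (simp add: cmod_power2 x_def y_def)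
    also have "\<dots> < (x + 1 - 2*\<alpha>)^2 + y^2"
    proof -
      have "(x + 1 - 2*\<alpha>)^2 - (x - 1)^2 = (2 - 2*\<alpha>) * (2*x - 2*\<alpha>)" by (simp add: power2_eq_square algebra_simps)
      moreover have "(2 - 2*\<alpha>) * (2*x - 2*\<alpha>) > 0" using al xa by simp
      ultimately show ?thesis by linarith
    qed
    also have "\<dots> = (cmod (Q u + 1 - 2 * of_real \<alpha>))^2" by (simp add: cmod_power2 x_def y_def)
    finally have "cmod (Q u - 1) < cmod (Q u + 1 - 2 * of_real \<alpha>)"
      by (rule power_less_imp_less_base) simp
    thus ?thesis unfolding w_def using den[OF u] by (simp add: norm_divide divide_less_eq)
  qed
  have zr: "cmod z < r0" using z unfolding r0_def .
  have zb: "cmod z < 1" using zr r0(3) by linarith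
  have wz: "cmod (w z) \<le> cmod z" by (rule Schwarz_Lemma(1)[OF hw w0 wlt zb])
  hence wr: "cmod (w z) < r0" using z unfolding r0_def by simp
  have eq: "(Q z - 1) * (1 - w z) = of_real (2 - 2*\<alpha>) * w z"
  proof -
    have "w z * (Q z + 1 - 2 * of_real \<alpha>) = Q z - 1" unfolding w_def using den[of z] zb by simp
    thus ?thesis by (simp add: algebra_simps)
  qed
  have "cmod (Q z - 1) < 2/3"
  proof (rule ccontr)
    assume "\<not> cmod (Q z - 1) < 2/3"
    hence g: "cmod (Q z - 1) \<ge> 2/3" by simp
    have "cmod (Q z - 1) * cmod (1 - w z) = (2 - 2*\<alpha>) * cmod (w z)"
    proof -
      have c: "cmod (complex_of_real (2 - 2*\<alpha>)) = 2 - 2*\<alpha>" using al by (simp only: norm_of_real)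
      show ?thesis using arg_cong[OF eq, of cmod] unfolding norm_mult c .
    qed
    moreover have "cmod (1 - w z) \<ge> 1 - cmod (w z)" by (metis norm_one norm_triangle_ineq2)
    moreover have "1 - cmod (w z) > 0" using wr r0(3) by linarith
    ultimately have "(2/3) * (1 - cmod (w z)) \<le> (2 - 2*\<alpha>) * cmod (w z)"
      using g by (smt (verit) mult_mono norm_ge_zero)
    hence "2 \<le> (8 - 6*\<alpha>) * cmod (w z)" by (simp add: field_simps)
    hence "2 / (8 - 6*\<alpha>) \<le> cmod (w z)" using al by (simp add: divide_le_eq mult.commute)
    thus False using wr r0 by simp
  qed
  thus ?thesis unfolding Q_def by (rule disk_in_Omega)
qed


theorem mainTheorem3:
  fixes \<alpha> :: real
  assumes "0 \<le> \<alpha>" and "\<alpha> < 1"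
  shows "2 / (3 * (1 - 2 * \<alpha>) + 5) \<in> NeRadii (starlike_order \<alpha>)
       \<and> (\<forall>\<rho>\<in>NeRadii (starlike_order \<alpha>). \<rho> \<le> 2 / (3 * (1 - 2 * \<alpha>) + 5))
       \<and> k_ext \<alpha> \<in> starlike_order \<alpha>
       \<and> (\<exists>z. cmod z = 2 / (3 * (1 - 2 * \<alpha>) + 5) \<and> Qf (k_ext \<alpha>) z \<in> frontier OmegaNe)"
proof -
  define r0 where "r0 = 2 / (3 * (1 - 2 * \<alpha>) + 5)"
  have r0: "r0 = 2 / (8 - 6*\<alpha>)" "0 < r0" "r0 < 1" using assms by (auto simp: r0_def field_simps)
  have kin: "k_ext \<alpha> \<in> starlike_order \<alpha>" by (rule k_in[OF assms])
  have A: "r0 \<in> NeRadii (starlike_order \<alpha>)"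
    unfolding NeRadii_def using r0 class_in[OF assms, folded r0_def] by auto
  have kv: "Re (Qf (k_ext \<alpha>) (of_real x)) = 1 + (2 - 2*\<alpha>) * x / (1 - x)" "Im (Qf (k_ext \<alpha>) (of_real x)) = 0"
    if "0 \<le> x" "x < 1" for x
    using k_real[OF that, of \<alpha>] by simp_all
  have B: "\<rho> \<le> r0" if "\<rho> \<in> NeRadii (starlike_order \<alpha>)" for \<rho>
  proof (rule ccontr)
    assume "\<not> \<rho> \<le> r0"
    hence rg: "\<rho> > r0" by simp
    have rho: "\<rho> \<le> 1" "\<forall>f\<in>starlike_order \<alpha>. Qf f ` ball 0 \<rho> \<subseteq> OmegaNe"
      using that unfolding NeRadii_def by auto
    define x where "x = (r0 + \<rho>) / 2"
    have x: "r0 < x" "x < \<rho>" "x < 1" "0 \<le> x" using rg rho(1) r0(2) unfolding x_def by (auto simp: field_simps)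
    have "complex_of_real x \<in> ball 0 \<rho>" using x by simp
    hence "Qf (k_ext \<alpha>) (of_real x) \<in> OmegaNe" using rho(2) kin by blast
    hence lt: "Re (Qf (k_ext \<alpha>) (of_real x)) < 5/3" using Omega_real kv(2)[OF x(4,3)] by blast
    have "2 < (8 - 6*\<alpha>) * x" using x(1) r0(1) assms by (simp add: divide_less_eq mult.commute)
    hence "2/3 * (1 - x) < (2 - 2*\<alpha>) * x" by (simp add: field_simps)
    hence "2/3 < (2 - 2*\<alpha>) * x / (1 - x)" using x by (simp add: less_divide_eq)
    thus False using lt kv(1)[OF x(4,3)] by linarith
  qed
  have C: "Qf (k_ext \<alpha>) (of_real r0) \<in> frontier OmegaNe"
  proof -
    have h: "1 + (2 - 2*\<alpha>) * r0 / (1 - r0) = 5/3" using r0 assms by (simp add: field_simps)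
    have "Qf (k_ext \<alpha>) (of_real r0) = of_real (5/3)" using k_real[of r0 \<alpha>] r0(2,3) unfolding h by simp
    thus ?thesis using five_thirds_frontier by (simp only:)
  qed
  have "cmod (complex_of_real r0) = r0" using r0(2) by (simp only: norm_of_real)
  thus ?thesis using A B kin C unfolding r0_def by blast
qed

end
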